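(* Let $S,E\ge0$ be integers and let $\mathbf c=(c_1,\dots,c_m)$, $\mathbf d=(d_1,\dots,d_m)$ be partitions with $\mathbf c\ne\mathbf d$. Let $\ell=\max\{i: c_i\ne d_i\}$, $f=\max\{i\in\{1,\dots,\ell\}: c_i<d_{i-1}\}$ (with $d_0=+\infty$) and $f'=\max\{i\in\{1,\dots,\ell\}: d_i<c_{i-1}\}$ (with $c_0=+\infty$). 1. There exists a partition $\mathbf g=(g_1,\dots,g_{m+1})$ with $\sum_{i=1}^{m+1}g_i=S$, $\mathbf g\prec'\mathbf c$ and $\mathbf g\prec'\mathbf d$ if and only if $S\le\sum_{i=1}^m\min\{c_i,d_i\}+\max\{c_f,d_{f'}\}$. 2. If $f>1$ and $f'>1$, there exists a partition $\mathbf e=(e_1,\dots,e_{m-1})$ with $\sum_{i=1}^{m-1}e_i=E$, $\mathbf c\prec'\mathbf e$ and $\mathbf d\prec'\mathbf e$ if and only if $E\ge\sum_{i=1}^m\max\{c_i,d_i\}-\max\{c_f,d_{f'}\}$. 3. If $f=1$ or $f'=1$, there exists a partition $\mathbf e=(e_1,\dots,e_{m-1})$ with $\sum_{i=1}^{m-1}e_i=E$, $\mathbf c\prec'\mathbf e$ and $\mathbf d\prec'\mathbf e$ if and only if $$E=\sum_{i=1}^m\max\{c_i,d_i\}-\max\{c_f,d_{f'}\}\quad\text{or}\quad E\ge\sum_{i=1}^m\max\{c_i,d_i\}-\max\{c_{f+1},d_{f'+1}\};$$ equivalently, if and only if $E=\sum_{i=2}^m\max\{c_i,d_i\}$ or 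$E\ge\max\{c_1,d_1\}+\sum_{i=3}^m\max\{c_i,d_i\}$.
   Context: A partition is a nonincreasing finite sequence of nonnegative integers; for a sequence $(a_1,\dots,a_m)$ one sets $a_i=-\infty$ for $i>m$. 1-step generalized majorization: for nonincreasing integer sequences $\mathbf g=(g_1,\dots,g_{k+1})$ and $\mathbf a=(a_1,\dots,a_k)$, set $a_{k+1}=-\infty$ and $h=\min\{i: a_i<g_i\}$; then $\mathbf g\prec'\mathbf a$ means $a_i=g_{i+1}$ for all $h\le i\le k$. Empty sums are $0$. *)

theory Defs
  imports Main "HOL-Library.Extended_Real"
begin

text \<open>Sequences (a_1,...,a_k) are int lists; a_i is stored at position i-1.\<close>

definition is_partition :: "int list \<Rightarrow> bool" where
  "is_partition xs \<longleftrightarrow> sorted_wrt (\<ge>) xs \<and> (\<forall>x\<in>set xs. 0 \<le> x)"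

definition entx :: "int list \<Rightarrow> nat \<Rightarrow> ereal" where
  "entx xs i = (if i = 0 then \<infinity> else if i \<le> length xs then ereal (xs ! (i - 1)) else -\<infinity>)"

text \<open>1-step generalized majorization g \<prec>' a, for nonincreasing integer sequences
  g = (g_1,...,g_{k+1}) and a = (a_1,...,a_k); h = min {i. a_i < g_i} with a_{k+1} = -infinity.\<close>
definition gmaj :: "int list \<Rightarrow> int list \<Rightarrow> bool" where
  "gmaj g a \<longleftrightarrow> length g = Suc (length a) \<and> sorted_wrt (\<ge>) g \<and> sorted_wrt (\<ge>) a \<and>
     (let h = (LEAST i. 1 \<le> i \<and> entx a i < entx g i)
      in \<forall>i. h \<le> i \<and> i \<le> length a \<longrightarrow> a ! (i - 1) = g ! i)"

definition lidx :: "int list \<Rightarrow> int list \<Rightarrow> nat" where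
  "lidx c d = Max {i \<in> {1..length c}. c ! (i - 1) \<noteq> d ! (i - 1)}"

text \<open>f = max {i \<in> {1..\<ell>}. c_i < d_{i-1}} with d_0 = +infinity;
  f' is obtained by swapping c and d.\<close>
definition fidx :: "int list \<Rightarrow> int list \<Rightarrow> nat" where
  "fidx c d = Max {i \<in> {1..lidx c d}. entx c i < entx d (i - 1)}"

end

theory Submission
  imports Defs
begin


lemma sorted_ge_nth:
  assumes "sorted_wrt (\<ge>) (xs::int list)" "i \<le> j" "j < length xs"
  shows "xs ! j \<le> xs ! i"
  using assms sorted_wrt_nth_less[OF assms(1)] by (cases "i = j") auto

lemma sorted_by_adj:
  assumes "\<And>j. Suc j < length (xs::int list) \<Longrightarrow> xs ! Suc j \<le> xs ! j"
  shows "sorted_wrt (\<ge>) xs"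
  using assms by (subst sorted_wrt_iff_nth_Suc_transp) (auto simp: transp_def)

lemma gmaj_iff:
  "gmaj g a \<longleftrightarrow> length g = Suc (length a) \<and> sorted_wrt (\<ge>) g \<and> sorted_wrt (\<ge>) a \<and>
     (\<exists>h\<le>length a. (\<forall>j<h. g!j \<le> a!j) \<and> (\<forall>j. h \<le> j \<longrightarrow> j < length a \<longrightarrow> a!j = g!(Suc j)))"
proof -
  define P where "P i \<longleftrightarrow> 1 \<le> i \<and> entx a i < entx g i" for i
  define h0 where "h0 = (LEAST i. P i)"
  show ?thesis
  proof (cases "length g = Suc (length a)")
    case False then show ?thesis by (simp add: gmaj_def)
  next
    case len: True
    have PS: "P (Suc (length a))" using len by (simp add: P_def entx_def)
    have h0P: "P h0" unfolding h0_def by (rule LeastI[of P, OF PS])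
    have h0le: "h0 \<le> Suc (length a)" unfolding h0_def by (rule Least_le[of P, OF PS])
    have h0ge: "1 \<le> h0" using h0P by (simp add: P_def)
    have notP: "\<not> P i" if "i < h0" for i using that unfolding h0_def by (rule not_less_Least)
    have gm: "gmaj g a \<longleftrightarrow> sorted_wrt (\<ge>) g \<and> sorted_wrt (\<ge>) a \<and>
         (\<forall>i. h0 \<le> i \<and> i \<le> length a \<longrightarrow> a ! (i - 1) = g ! i)"
      using len unfolding gmaj_def Let_def h0_def P_def by simp
    have "(\<forall>i. h0 \<le> i \<and> i \<le> length a \<longrightarrow> a ! (i - 1) = g ! i) \<longleftrightarrow>
       (\<exists>h\<le>length a. (\<forall>j<h. g!j \<le> a!j) \<and> (\<forall>j. h \<le> j \<longrightarrow> j < length a \<longrightarrow> a!j = g!(Suc j)))"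
    proof
      assume A: "\<forall>i. h0 \<le> i \<and> i \<le> length a \<longrightarrow> a ! (i - 1) = g ! i"
      show "\<exists>h\<le>length a. (\<forall>j<h. g!j \<le> a!j) \<and> (\<forall>j. h \<le> j \<longrightarrow> j < length a \<longrightarrow> a!j = g!(Suc j))"
      proof (intro exI[of _ "h0 - 1"] conjI allI impI)
        show "h0 - 1 \<le> length a" using h0le by simp
      next
        fix j assume j: "j < h0 - 1"
        have "\<not> P (Suc j)" using j by (intro notP) simp
        moreover have "Suc j \<le> length a" using j h0le by simp
        ultimately show "g ! j \<le> a ! j" using len by (simp add: P_def entx_def)
      next
        fix j assume "h0 - 1 \<le> j" "j < length a"
        then show "a ! j = g ! Suc j" using A[rule_format, of "Suc j"] by simp
      qed
    next
      assume "\<exists>h\<le>length a. (\<forall>j<h. g!j \<le> a!j) \<and> (\<forall>j. h \<le> j \<longrightarrow> j < length a \<longrightarrow> a!j = g!(Suc j))"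
      then obtain h where h: "h \<le> length a" "\<forall>j<h. g!j \<le> a!j"
        "\<forall>j. h \<le> j \<longrightarrow> j < length a \<longrightarrow> a!j = g!(Suc j)" by blast
      have "h < h0"
      proof (rule ccontr)
        assume "\<not> h < h0"
        then have "h0 - 1 < h" "h0 \<le> length a" using h0ge h(1) by auto
        moreover have "g ! (h0 - 1) \<le> a ! (h0 - 1)" using h(2) \<open>h0 - 1 < h\<close> by simp
        ultimately show False using h0P h0ge len by (simp add: P_def entx_def)
      qed
      show "\<forall>i. h0 \<le> i \<and> i \<le> length a \<longrightarrow> a ! (i - 1) = g ! i"
      proof (intro allI impI)
        fix i assume i: "h0 \<le> i \<and> i \<le> length a"
        then have "h \<le> i - 1" "i - 1 < length a" "Suc (i - 1) = i" using \<open>h < h0\<close> h0ge by auto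
        then show "a ! (i - 1) = g ! i" using h(3) by metis
      qed
    qed
    then show ?thesis using gm len by simp
  qed
qed

lemma split_sum:
  fixes xs :: "int list"
  assumes "length xs = Suc n" "h \<le> n"
  shows "sum_list xs = xs!h + (\<Sum>j<n. if j<h then xs!j else xs!(Suc j))"
  using assms(2)
proof (induction h)
  case 0
  obtain a ys where xs: "xs = a # ys" and ly: "length ys = n" using assms(1) by (cases xs) auto
  have "sum_list ys = (\<Sum>j<n. ys!j)" using ly by (simp add: sum_list_sum_nth atLeast0LessThan)
  then show ?case using xs by simp
next
  case (Suc h)
  have eq: "(\<Sum>j<n. if j<Suc h then xs!j else xs!(Suc j)) =
            (\<Sum>j<n. if j<h then xs!j else xs!(Suc j)) + (\<Sum>j<n. if j = h then xs!h - xs!Suc h else 0)"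
    by (subst sum.distrib[symmetric]) (rule sum.cong, auto)
  have "(\<Sum>j<n. if j = h then xs!h - xs!Suc h else 0) = xs!h - xs!Suc h"
    using Suc.prems by simp
  then show ?case using Suc eq by simp
qed

lemma sum_shift1: "(\<Sum>i=Suc a..m. F (i - 1)) = (\<Sum>j=a..<m. (F j :: int))"
  by (induction m) (auto simp: atLeastLessThanSuc atLeastAtMostSuc_conv)

lemma sum_list_map_upt: "sum_list (map F [0..<n]) = (\<Sum>j<n. (F j :: int))"
  by (simp add: sum_set_upt_conv_sum_list_nat[symmetric] atLeast0LessThan)

lemma below_partition:
  fixes p :: "int list"
  assumes "sorted_wrt (\<ge>) p" "\<forall>x\<in>set p. 0 \<le> x" "0 \<le> S" "S \<le> sum_list p"
  shows "\<exists>q. length q = length p \<and> sorted_wrt (\<ge>) q \<and> (\<forall>x\<in>set q. 0 \<le> x) \<and>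
             (\<forall>j<length p. q!j \<le> p!j) \<and> sum_list q = S"
  using assms
proof (induction p arbitrary: S rule: rev_induct)
  case Nil then show ?case by simp
next
  case (snoc x ps)
  have sps: "sorted_wrt (\<ge>) ps" and nps: "\<forall>x\<in>set ps. 0 \<le> x" and x0: "0 \<le> x"
    and xle: "\<forall>y\<in>set ps. x \<le> y"
    using snoc.prems by (auto simp: sorted_wrt_append)
  show ?case
  proof (cases "S \<le> sum_list ps")
    case True
    then obtain q where q: "length q = length ps" "sorted_wrt (\<ge>) q" "\<forall>x\<in>set q. 0 \<le> x"
      "\<forall>j<length ps. q!j \<le> ps!j" "sum_list q = S" using snoc.IH[OF sps nps snoc.prems(3)] by blast
    show ?thesis
      apply (rule exI[of _ "q @ [0]"])
      using q x0 by (auto simp: sorted_wrt_append nth_append less_Suc_eq)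
  next
    case False
    show ?thesis
      apply (rule exI[of _ "ps @ [S - sum_list ps]"])
      using False snoc.prems sps nps xle by (auto simp: sorted_wrt_append nth_append less_Suc_eq)
  qed
qed



locale tp =
  fixes c d :: "int list" and m l f f' :: nat
  assumes sc: "sorted_wrt (\<ge>) c" and sd: "sorted_wrt (\<ge>) d"
  and nc: "\<forall>x\<in>set c. 0 \<le> x" and nd: "\<forall>x\<in>set d. 0 \<le> x"
  and lc: "length c = m" and ld: "length d = m"
  and lm: "l < m" and lne: "c!l \<noteq> d!l" and leq: "\<And>j. l < j \<Longrightarrow> j < m \<Longrightarrow> c!j = d!j"
  and fl: "f \<le> l" and fin: "f = 0 \<or> c!f < d!(f-1)"
  and fmax: "\<And>i. f < i \<Longrightarrow> i \<le> l \<Longrightarrow> d!(i-1) \<le> c!i"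
  and f'l: "f' \<le> l" and f'in: "f' = 0 \<or> d!f' < c!(f'-1)"
  and f'max: "\<And>i. f' < i \<Longrightarrow> i \<le> l \<Longrightarrow> c!(i-1) \<le> d!i"

lemma tp_sym: "tp c d m l f f' \<Longrightarrow> tp d c m l f' f"
  unfolding tp_def by metis

context tp
begin

lemma cmono: "i \<le> j \<Longrightarrow> j < m \<Longrightarrow> c!j \<le> c!i"
  using sorted_ge_nth[OF sc] lc by simp
lemma dmono: "i \<le> j \<Longrightarrow> j < m \<Longrightarrow> d!j \<le> d!i"
  using sorted_ge_nth[OF sd] ld by simp
lemma cnn: "j < m \<Longrightarrow> 0 \<le> c!j" using nc lc nth_mem by metis
lemma dnn: "j < m \<Longrightarrow> 0 \<le> d!j" using nd ld nth_mem by metis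

lemma ub1_aux:
  assumes lg: "length g = Suc m" and sg: "sorted_wrt (\<ge>) g"
   and hh: "hc \<le> hz" "hz \<le> m" and gc1: "\<forall>j<hc. g!j \<le> c!j"
   and gc2: "\<forall>j. hc \<le> j \<longrightarrow> j < m \<longrightarrow> c!j = g!Suc j"
   and gd1: "\<forall>j<hz. g!j \<le> d!j" and gd2: "\<forall>j. hz \<le> j \<longrightarrow> j < m \<longrightarrow> d!j = g!Suc j"
  shows "sum_list g \<le> (\<Sum>j<m. min (c!j) (d!j)) + max (c!f) (d!f')"
proof -
  have split: "sum_list g = g!hc + (\<Sum>j<m. if j<hc then g!j else g!Suc j)"
    using split_sum[OF lg, of hc] hh by linarith
  have s1: "(\<Sum>j<m. if j<hc then g!j else g!Suc j) \<le> (\<Sum>j<m. if j<hc then min (c!j) (d!j) else c!j)"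
    by (rule sum_mono) (use gc1 gd1 gc2 hh in auto)
  have lhd: "l < hz"
  proof (rule ccontr)
    assume "\<not> l < hz" then have "c!l = d!l" using gc2 gd2 hh lm by simp
    then show False using lne by simp
  qed
  show ?thesis
  proof (cases "hc = hz")
    case True
    have "hc \<noteq> 0" using lhd True by simp
    have lhc: "l < hc" using lhd True by simp
    have eqs: "(\<Sum>j<m. if j<hc then min (c!j) (d!j) else c!j) = (\<Sum>j<m. min (c!j) (d!j))"
      by (rule sum.cong) (use gc2 gd2 True in auto)
    have "g!hc \<le> g!(hc-1)" using sorted_ge_nth[OF sg, of "hc-1" hc] lg hh by simp
    also have "\<dots> \<le> min (c!(hc-1)) (d!(hc-1))" using gc1 gd1 \<open>hc \<noteq> 0\<close> True by simp
    also have "\<dots> \<le> c!l" using cmono[of l "hc-1"] lhc hh by (simp add: min.coboundedI1)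
    also have "\<dots> \<le> c!f" using cmono[OF fl] lm by simp
    finally show ?thesis using split s1 eqs by simp
  next
    case False
    then have hlt: "hc < hz" using hh by simp
    have cle: "c!j \<le> d!j" if "hc < j" "j < m" for j
    proof (cases "hz \<le> j")
      case True then show ?thesis using gc2 gd2 that hh by simp
    next
      case False
      have "c!(j-1) = g!j" using gc2[rule_format, of "j-1"] that by simp
      also have "\<dots> \<le> d!j" using gd1 False by simp
      finally show ?thesis using cmono[of "j-1" j] that by simp
    qed
    have s2: "(\<Sum>j<m. if j<hc then min (c!j) (d!j) else c!j) \<le>
        (\<Sum>j<m. min (c!j) (d!j) + (if j = hc then max 0 (c!hc - d!hc) else 0))"
      by (rule sum_mono) (use cle in auto)
    have s3: "(\<Sum>j<m. min (c!j) (d!j) + (if j = hc then max 0 (c!hc - d!hc) else 0))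
       = (\<Sum>j<m. min (c!j) (d!j)) + max 0 (c!hc - d!hc)"
      using hlt hh by (simp add: sum.distrib)
    have ghc: "g!hc \<le> d!hc" using gd1 hlt by simp
    have f'hc: "f' \<le> hc"
    proof (rule ccontr)
      assume "\<not> f' \<le> hc"
      then have a: "hc < f'" "f' < hz" using f'l lhd by auto
      then have "d!f' < c!(f'-1)" using f'in by simp
      moreover have "c!(f'-1) = g!f'" using gc2[rule_format, of "f'-1"] a hh by simp
      moreover have "g!f' \<le> d!f'" using gd1 a by simp
      ultimately show False by simp
    qed
    have dd: "d!hc \<le> d!f'" using dmono[OF f'hc] hlt hh by simp
    have cc: "c!hc \<le> max (c!f) (d!f')"
    proof (cases "c!hc \<le> d!hc")
      case True then show ?thesis using dd by simp
    next
      case False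
      have "l \<le> hc"
      proof (rule ccontr)
        assume "\<not> l \<le> hc"
        then have "c!hc = g!Suc hc" "g!Suc hc \<le> d!Suc hc" "d!Suc hc \<le> d!hc"
          using gc2 gd1 lhd hh lm dmono[of hc "Suc hc"] by auto
        then show False using False by simp
      qed
      then show ?thesis using cmono[of f hc] fl hlt hh by simp
    qed
    show ?thesis using split s1 s2 s3 ghc dd cc by simp
  qed
qed

lemma ub1:
  assumes "length g = Suc m" "gmaj g c" "gmaj g d"
  shows "sum_list g \<le> (\<Sum>j<m. min (c!j) (d!j)) + max (c!f) (d!f')"
proof -
  obtain hc where hc: "hc \<le> m" "\<forall>j<hc. g!j \<le> c!j" "\<forall>j. hc \<le> j \<longrightarrow> j < m \<longrightarrow> c!j = g!Suc j"
    and sg: "sorted_wrt (\<ge>) g"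
    using assms(2) lc unfolding gmaj_iff by auto
  obtain hz where hz: "hz \<le> m" "\<forall>j<hz. g!j \<le> d!j" "\<forall>j. hz \<le> j \<longrightarrow> j < m \<longrightarrow> d!j = g!Suc j"
    using assms(3) ld unfolding gmaj_iff by auto
  show ?thesis
  proof (cases "hc \<le> hz")
    case True then show ?thesis using ub1_aux[OF assms(1) sg] hc hz by blast
  next
    case False
    have "sum_list g \<le> (\<Sum>j<m. min (d!j) (c!j)) + max (d!f') (c!f)"
      using tp.ub1_aux[OF tp_sym[OF tp_axioms] assms(1) sg, of hz hc] hc hz False by simp
    then show ?thesis by (simp add: min.commute max.commute)
  qed
qed

lemma dle_f:
  assumes "d!f' \<le> c!f" "f \<le> j" "j < m"
  shows "d!j \<le> c!j"
proof -
  have df: "d!f \<le> c!f"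
  proof (rule ccontr)
    assume A: "\<not> d!f \<le> c!f"
    show False
    proof (cases "f < l")
      case True
      then have "d!f \<le> c!Suc f" using fmax[of "Suc f"] by simp
      then show False using A cmono[of f "Suc f"] True lm by simp
    next
      case False
      then have "f = l" using fl by simp
      then have "d!l \<le> d!f'" using dmono[OF f'l] lm by simp
      then show False using A assms(1) \<open>f = l\<close> by simp
    qed
  qed
  show ?thesis
  proof (cases "j = f")
    case True then show ?thesis using df by simp
  next
    case False
    show ?thesis
    proof (cases "j \<le> l")
      case True
      have "d!j \<le> d!(j-1)" using dmono[of "j-1" j] assms by simp
      also have "\<dots> \<le> c!j" using fmax[of j] True False assms by simp
      finally show ?thesis .
    next
      case False then show ?thesis using leq[of j] assms by simp
    qed
  qed
qed

lemma ex1_aux: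
  assumes dc: "d!f' \<le> c!f" and S0: "0 \<le> S" and SB: "S \<le> (\<Sum>j<m. min (c!j) (d!j)) + c!f"
  shows "\<exists>g. is_partition g \<and> length g = m + 1 \<and> sum_list g = S \<and> gmaj g c \<and> gmaj g d"
proof -
  define mn where "mn j = min (c!j) (d!j)" for j
  have mnmono: "mn j \<le> mn i" if "i \<le> j" "j < m" for i j
    using cmono[OF that] dmono[OF that] by (auto simp: mn_def)
  have mnnn: "0 \<le> mn j" if "j < m" for j using cnn[OF that] dnn[OF that] by (simp add: mn_def)
  show ?thesis
  proof (cases "S \<le> (\<Sum>j<m. mn j)")
    case True
    define p where "p = map (\<lambda>j. if j < m then mn j else mn (m-1)) [0..<Suc m]"
    have lp: "length p = Suc m" by (simp add: p_def)
    have sp: "sorted_wrt (\<ge>) p"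
      by (rule sorted_by_adj) (auto simp: p_def nth_append intro!: mnmono)
    have np: "\<forall>x\<in>set p. 0 \<le> x" using lm by (auto simp: p_def intro!: mnnn)
    have "sum_list p = (\<Sum>j<m. mn j) + mn (m-1)"
      by (simp add: p_def sum_list_map_upt)
    then have Sp: "S \<le> sum_list p" using True mnnn[of "m-1"] lm by simp
    obtain q where q: "length q = Suc m" "sorted_wrt (\<ge>) q" "\<forall>x\<in>set q. 0 \<le> x"
      "\<forall>j<Suc m. q!j \<le> p!j" "sum_list q = S"
      using below_partition[OF sp np S0 Sp] lp by auto
    have pn: "j < m \<Longrightarrow> p!j = mn j" for j by (simp add: p_def del: upt_Suc)
    have qc: "\<forall>j<m. q!j \<le> c!j" "\<forall>j<m. q!j \<le> d!j"
      using q(4) pn by (auto simp: mn_def, smt (verit) less_SucI, smt (verit) less_SucI)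
    have "gmaj q c" unfolding gmaj_iff using q lc sc qc by (intro conjI exI[of _ m]) auto
    moreover have "gmaj q d" unfolding gmaj_iff using q ld sd qc by (intro conjI exI[of _ m]) auto
    ultimately show ?thesis using q by (auto simp: is_partition_def)
  next
    case False
    define y where "y = S - (\<Sum>j<m. mn j)"
    have y0: "0 \<le> y" and yc: "y \<le> c!f" using False SB by (auto simp: y_def mn_def)
    define P where "P p \<longleftrightarrow> f \<le> p \<and> (p = m \<or> d!p \<le> y)" for p
    define p where "p = (LEAST p. P p)"
    have Pm: "P m" using fl lm by (simp add: P_def)
    have Pp: "P p" unfolding p_def by (rule LeastI[of P, OF Pm])
    have pm: "p \<le> m" unfolding p_def by (rule Least_le[of P, OF Pm])
    have fp: "f \<le> p" using Pp by (simp add: P_def)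
    have ylow: "p = m \<or> d!p \<le> y" using Pp by (simp add: P_def)
    have yup: "p = f \<or> y < d!(p-1)"
    proof (cases "p = f")
      case False
      then have "\<not> P (p-1)" unfolding p_def using fp by (intro not_less_Least) (simp add: p_def)
      then show ?thesis using fp False pm by (auto simp: P_def)
    qed simp
    have dmn: "mn j = d!j" if "f \<le> j" "j < m" for j using dle_f[OF dc that] by (simp add: mn_def)
    define g where "g = map (\<lambda>j. if j < p then mn j else if j = p then y else d!(j-1)) [0..<Suc m]"
    have lg: "length g = Suc m" by (simp add: g_def)
    have gn: "j < Suc m \<Longrightarrow> g!j = (if j < p then mn j else if j = p then y else d!(j-1))" for j
      by (simp add: g_def del: upt_Suc)
    have sg: "sorted_wrt (\<ge>) g"
    proof (rule sorted_by_adj)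
      fix j assume j: "Suc j < length g"
      then have j': "j < m" using lg by simp
      consider "Suc j < p" | "Suc j = p" | "j = p" | "p < j" by linarith
      then show "g!Suc j \<le> g!j"
      proof cases
        case 1 then show ?thesis using gn j lg mnmono[of j "Suc j"] pm by simp
      next
        case 2
        have "y \<le> mn j"
        proof (cases "p = f")
          case True
          then have "c!f < d!(f-1)" using fin 2 by simp
          moreover have "j = f - 1" using 2 True by simp
          ultimately show ?thesis using yc 2 True cmono[of j "Suc j"] j' pm fl lm by (simp add: mn_def)
        next
          case False
          moreover have "p - 1 = j" using 2 by simp
          ultimately show ?thesis using yup dmn[of j] 2 fp j' by auto
        qed
        then show ?thesis using gn j lg 2 by simp
      next
        case 3 then show ?thesis using gn j lg ylow j' by auto
      next
        case 4 then show ?thesis using gn j lg dmono[of "j-1" j] j' by simp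
      qed
    qed
    have ng: "\<forall>x\<in>set g. 0 \<le> x"
      using y0 mnnn dnn pm by (auto simp: g_def)
    have sumg: "sum_list g = S"
    proof -
      have "sum_list g = g!p + (\<Sum>j<m. if j<p then g!j else g!Suc j)"
        using split_sum[OF lg pm] .
      also have "(\<Sum>j<m. if j<p then g!j else g!Suc j) = (\<Sum>j<m. mn j)"
        by (rule sum.cong) (use gn dmn fp in auto)
      finally show ?thesis using gn pm by (simp add: y_def)
    qed
    have gd: "gmaj g d" unfolding gmaj_iff
      using lg ld sg sd pm gn by (intro conjI exI[of _ p]) (auto simp: mn_def)
    have gc: "gmaj g c" unfolding gmaj_iff
    proof (intro conjI exI[of _ "max p (Suc l)"] allI impI)
      show "max p (Suc l) \<le> length c" using pm lm lc by simp
    next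
      fix j assume j: "j < max p (Suc l)"
      then have j': "j < m" using pm lm by auto
      consider "j < p" | "j = p" | "p < j" by linarith
      then show "g!j \<le> c!j"
      proof cases
        case 1 then show ?thesis using gn j' by (simp add: mn_def)
      next
        case 2
        show ?thesis
        proof (cases "p = f")
          case True then show ?thesis using yc gn 2 j' by simp
        next
          case False
          then have "y < d!(p-1)" using yup by simp
          moreover have "d!(p-1) \<le> c!p" using fmax[of p] False fp j 2 by simp
          ultimately show ?thesis using gn 2 j' by simp
        qed
      next
        case 3
        then have "d!(j-1) \<le> c!j" using fmax[of j] fp j by simp
        then show ?thesis using gn 3 j' by simp
      qed
    next
      fix j assume j: "max p (Suc l) \<le> j" "j < length c"
      then show "c!j = g!Suc j" using gn[of "Suc j"] leq[of j] lc by simp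
    qed (use lg lc sg sc in auto)
    show ?thesis using sg ng lg sumg gc gd by (auto simp: is_partition_def)
  qed
qed

lemma ex1:
  assumes S0: "0 \<le> S" and SB: "S \<le> (\<Sum>j<m. min (c!j) (d!j)) + max (c!f) (d!f')"
  shows "\<exists>g. is_partition g \<and> length g = m + 1 \<and> sum_list g = S \<and> gmaj g c \<and> gmaj g d"
proof (cases "d!f' \<le> c!f")
  case True then show ?thesis using ex1_aux[OF True S0] SB by simp
next
  case False
  have "\<exists>g. is_partition g \<and> length g = m + 1 \<and> sum_list g = S \<and> gmaj g d \<and> gmaj g c"
    using tp.ex1_aux[OF tp_sym[OF tp_axioms], of S] False S0 SB by (simp add: min.commute)
  then show ?thesis by blast
qed

end


context tp
begin

lemma lb2_aux:
  assumes le: "length e = m - 1" and se: "sorted_wrt (\<ge>) e"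
   and hh: "hc \<le> hz" "hz \<le> m - 1" and ec1: "\<forall>j<hc. c!j \<le> e!j"
   and ec2: "\<forall>j. hc \<le> j \<longrightarrow> j < m - 1 \<longrightarrow> e!j = c!Suc j"
   and ed1: "\<forall>j<hz. d!j \<le> e!j" and ed2: "\<forall>j. hz \<le> j \<longrightarrow> j < m - 1 \<longrightarrow> e!j = d!Suc j"
  shows "(\<Sum>j<m. max (c!j) (d!j)) - max (c!f) (d!f') \<le> sum_list e \<and>
     (sum_list e = (\<Sum>j<m. max (c!j) (d!j)) - max (c!0) (d!0) \<or>
      (2 \<le> m \<and> (\<Sum>j<m. max (c!j) (d!j)) - max (c!1) (d!1) \<le> sum_list e))"
proof -
  define mx where "mx j = max (c!j) (d!j)" for j
  have m1: "Suc (m - 1) = m" using lm by simp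
  have cge: "d!Suc j \<le> c!Suc j" if "hc \<le> j" "j < m - 1" for j
  proof (cases "hz \<le> j")
    case True then show ?thesis using ec2[rule_format, of j] ed2[rule_format, of j] that by simp
  next
    case False
    then have "d!j \<le> e!j" using ed1 by simp
    moreover have "d!Suc j \<le> d!j" using dmono[of j "Suc j"] that by simp
    ultimately show ?thesis using ec2 that by simp
  qed
  have lx: "length (map mx [0..<m]) = Suc (m - 1)" using m1 by simp
  have cg: "(\<Sum>j<m-1. if j<hc then map mx [0..<m] ! j else map mx [0..<m] ! Suc j) = (\<Sum>j<m-1. if j<hc then mx j else mx (Suc j))"
    by (rule sum.cong) auto
  have sx: "(\<Sum>j<m. mx j) = mx hc + (\<Sum>j<m-1. if j<hc then mx j else mx (Suc j))"
    using split_sum[OF lx, of hc] hh m1 cg by (simp add: sum_list_map_upt del: upt_Suc)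
  have se': "sum_list e = (\<Sum>j<m-1. e!j)" using le by (simp add: sum_list_sum_nth atLeast0LessThan)
  have s1: "(\<Sum>j<m-1. if j<hc then mx j else mx (Suc j)) \<le> (\<Sum>j<m-1. e!j)"
    by (rule sum_mono) (use ec1 ed1 hh ec2 cge in \<open>auto simp: mx_def\<close>)
  have lhz: "l \<le> hz"
  proof (rule ccontr)
    assume "\<not> l \<le> hz"
    then have "c!l = d!l" using ec2[rule_format, of "l-1"] ed2[rule_format, of "l-1"] hh lm by simp
    then show False using lne by simp
  qed
  have mxM: "mx hc \<le> max (c!f) (d!f')"
  proof (cases "hc = hz")
    case True
    moreover have "hc < m" using hh lm by simp
    ultimately have "mx hc \<le> mx l" using cmono[of l hc] dmono[of l hc] lhz hh lm
      by (auto simp: mx_def le_max_iff_disj)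
    also have "\<dots> \<le> max (c!f) (d!f')" using cmono[OF fl] dmono[OF f'l] lm by (auto simp: mx_def)
    finally show ?thesis .
  next
    case False
    then have hlt: "hc < hz" using hh by simp
    have fhc: "f \<le> hc"
    proof (rule ccontr)
      assume "\<not> f \<le> hc"
      then have a: "hc < f" "f - 1 < hz" using fl lhz by auto
      then have "c!f < d!(f-1)" using fin by simp
      moreover have "e!(f-1) = c!f" using ec2[rule_format, of "f-1"] a hh by simp
      moreover have "d!(f-1) \<le> e!(f-1)" using ed1 a by simp
      ultimately show False by simp
    qed
    have "d!hc \<le> c!hc"
      using ed1 ec2 hlt hh cmono[of hc "Suc hc"] by fastforce
    moreover have "hc < m" using hlt hh lm by simp
    ultimately show ?thesis using cmono[OF fhc] hlt hh by (simp add: mx_def le_max_iff_disj)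
  qed
  have T: "(\<Sum>j<m. max (c!j) (d!j)) = (\<Sum>j<m. mx j)" "max (c!0) (d!0) = mx 0" "max (c!1) (d!1) = mx 1"
    by (simp_all add: mx_def)
  show ?thesis
  proof (cases "hc = 0")
    case True
    have "(\<Sum>j<m-1. if j<hc then mx j else mx (Suc j)) = (\<Sum>j<m-1. e!j)"
      by (rule sum.cong) (use True ec2 cge in \<open>auto simp: mx_def\<close>)
    then show ?thesis unfolding T using sx se' mxM True by simp
  next
    case False
    have hcm: "hc < m" using hh lm by simp
    have "c!hc \<le> c!1" "d!hc \<le> d!1" using cmono[of 1 hc, OF _ hcm] dmono[of 1 hc, OF _ hcm] False by auto
    then have "mx hc \<le> mx 1" "2 \<le> m" using False hcm by (auto simp: mx_def le_max_iff_disj)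
    then show ?thesis unfolding T using sx se' s1 mxM by linarith
  qed
qed

lemma lb2:
  assumes "gmaj c e" "gmaj d e"
  shows "(\<Sum>j<m. max (c!j) (d!j)) - max (c!f) (d!f') \<le> sum_list e \<and>
     (sum_list e = (\<Sum>j<m. max (c!j) (d!j)) - max (c!0) (d!0) \<or>
      (2 \<le> m \<and> (\<Sum>j<m. max (c!j) (d!j)) - max (c!1) (d!1) \<le> sum_list e))"
proof -
  have le: "length e = m - 1" and se: "sorted_wrt (\<ge>) e" using assms(1) lc unfolding gmaj_iff by auto
  obtain hc where hc: "hc \<le> m - 1" "\<forall>j<hc. c!j \<le> e!j" "\<forall>j. hc \<le> j \<longrightarrow> j < m - 1 \<longrightarrow> e!j = c!Suc j"
    using assms(1) le unfolding gmaj_iff by auto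
  obtain hz where hz: "hz \<le> m - 1" "\<forall>j<hz. d!j \<le> e!j" "\<forall>j. hz \<le> j \<longrightarrow> j < m - 1 \<longrightarrow> e!j = d!Suc j"
    using assms(2) le unfolding gmaj_iff by auto
  show ?thesis
  proof (cases "hc \<le> hz")
    case True then show ?thesis using lb2_aux[OF le se True] hc hz by blast
  next
    case False
    have "(\<Sum>j<m. max (d!j) (c!j)) - max (d!f') (c!f) \<le> sum_list e \<and>
     (sum_list e = (\<Sum>j<m. max (d!j) (c!j)) - max (d!0) (c!0) \<or>
      (2 \<le> m \<and> (\<Sum>j<m. max (d!j) (c!j)) - max (d!1) (c!1) \<le> sum_list e))"
      using tp.lb2_aux[OF tp_sym[OF tp_axioms] le se, of hz hc] hc hz False by simp
    then show ?thesis by (simp add: max.commute)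
  qed
qed

lemma ex_e:
  assumes hm: "h \<le> m - 1" and hcond: "\<forall>i. h < i \<longrightarrow> i \<le> l \<longrightarrow> d!(i-1) \<le> c!i"
    and k0: "0 \<le> k" and hk: "h = 0 \<longrightarrow> k = 0"
  shows "\<exists>e. is_partition e \<and> length e = m - 1 \<and>
     sum_list e = (\<Sum>j<m. max (c!j) (d!j)) - max (c!h) (d!h) + k \<and> gmaj c e \<and> gmaj d e"
proof -
  define mx where "mx j = max (c!j) (d!j)" for j
  have m1: "Suc (m - 1) = m" using lm by simp
  have cd: "d!i \<le> c!i" if "h < i" "i < m" for i
  proof (cases "i \<le> l")
    case True
    then have "d!(i-1) \<le> c!i" using hcond that by simp
    then show ?thesis using dmono[of "i-1" i] that by simp
  next
    case False then show ?thesis using leq[of i] that by simp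
  qed
  define e where "e = map (\<lambda>j. (if j<h then mx j else c!Suc j) + (if j = 0 then k else 0)) [0..<m-1]"
  have le: "length e = m - 1" by (simp add: e_def)
  have en: "j < m - 1 \<Longrightarrow> e!j = (if j<h then mx j else c!Suc j) + (if j = 0 then k else 0)" for j
    by (simp add: e_def)
  have mxmono: "mx j \<le> mx i" if "i \<le> j" "j < m" for i j
    using cmono[OF that] dmono[OF that] by (auto simp: mx_def)
  have se: "sorted_wrt (\<ge>) e"
  proof (rule sorted_by_adj)
    fix j assume j: "Suc j < length e"
    then have j': "Suc j < m - 1" using le by simp
    consider "Suc j < h" | "Suc j = h" | "h \<le> j" by linarith
    then show "e!Suc j \<le> e!j"
    proof cases
      case 1
      have "Suc j < m" using j' by simp
      then show ?thesis using 1 en j' mxmono[of j "Suc j"] k0 by auto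
    next
      case 2
      have "c!Suc (Suc j) \<le> c!j" using cmono[of j "Suc (Suc j)"] j' by simp
      then show ?thesis using en j' 2 k0 by (auto simp: mx_def)
    next
      case 3 then show ?thesis using en j' cmono[of "Suc j" "Suc (Suc j)"] hk by auto
    qed
  qed
  have ne: "\<forall>x\<in>set e. 0 \<le> x"
    using cnn dnn k0 by (fastforce simp: e_def mx_def)
  have sume: "sum_list e = (\<Sum>j<m. mx j) - mx h + k"
  proof -
    have "sum_list e = (\<Sum>j<m-1. (if j<h then mx j else c!Suc j) + (if j = 0 then k else 0))"
      by (simp add: e_def sum_list_map_upt)
    also have "\<dots> = (\<Sum>j<m-1. (if j<h then mx j else c!Suc j)) + k"
      using hk hm by (cases "h = 0") (auto simp: sum.distrib)
    also have "(\<Sum>j<m-1. (if j<h then mx j else c!Suc j)) = (\<Sum>j<m-1. (if j<h then mx j else mx (Suc j)))"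
      by (rule sum.cong) (use cd in \<open>auto simp: mx_def\<close>)
    moreover have "(\<Sum>j<m-1. if j<h then map mx [0..<m] ! j else map mx [0..<m] ! Suc j) = (\<Sum>j<m-1. if j<h then mx j else mx (Suc j))"
      by (rule sum.cong) auto
    ultimately show ?thesis
      using split_sum[of "map mx [0..<m]" "m-1" h] m1 hm by (simp add: sum_list_map_upt del: upt_Suc)
  qed
  have gc: "gmaj c e" unfolding gmaj_iff
    using le lc se sc hm en hk k0 lm by (intro conjI exI[of _ h]) (auto simp: mx_def)
  have gd: "gmaj d e" unfolding gmaj_iff
  proof (intro conjI exI[of _ "max h l"] allI impI)
    show "max h l \<le> length e" using hm lm le by simp
  next
    fix j assume j: "j < max h l"
    then have j': "j < m - 1" using hm lm by auto
    show "d!j \<le> e!j"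
    proof (cases "j < h")
      case True then show ?thesis using en j' k0 by (auto simp: mx_def le_max_iff_disj add_increasing2)
    next
      case False
      then have "d!j \<le> c!Suc j" using hcond[rule_format, of "Suc j"] j by simp
      then show ?thesis using en j' k0 False by (auto simp: add_increasing2)
    qed
  next
    fix j assume j: "max h l \<le> j" "j < length e"
    then show "e!j = d!Suc j" using en leq[of "Suc j"] le hk by auto
  qed (use le ld se sd m1 in auto)
  show ?thesis using se ne le sume gc gd by (auto simp: is_partition_def mx_def)
qed

lemma ex2:
  assumes "1 \<le> f" "1 \<le> f'" and EB: "(\<Sum>j<m. max (c!j) (d!j)) - max (c!f) (d!f') \<le> E"
  shows "\<exists>e. is_partition e \<and> length e = m - 1 \<and> sum_list e = E \<and> gmaj c e \<and> gmaj d e"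
proof (cases "d!f' \<le> c!f")
  case True
  have "max (c!f) (d!f) = c!f" using dle_f[OF True, of f] fl lm by simp
  then show ?thesis
    using ex_e[of f "E - ((\<Sum>j<m. max (c!j) (d!j)) - c!f)"] fl lm fmax assms True by simp
next
  case False
  have "max (d!f') (c!f') = d!f'" using tp.dle_f[OF tp_sym[OF tp_axioms], of f'] f'l lm False by simp
  then have "\<exists>e. is_partition e \<and> length e = m - 1 \<and> sum_list e = E \<and> gmaj d e \<and> gmaj c e"
    using tp.ex_e[OF tp_sym[OF tp_axioms], of f' "E - ((\<Sum>j<m. max (c!j) (d!j)) - d!f')"]
      f'l lm f'max assms False by (simp add: max.commute)
  then show ?thesis by blast
qed

lemma ex3_aux:
  assumes f0: "f = 0" and E: "E = (\<Sum>j<m. max (c!j) (d!j)) - max (c!0) (d!0) \<or>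
      (2 \<le> m \<and> (\<Sum>j<m. max (c!j) (d!j)) - max (c!1) (d!1) \<le> E)"
  shows "\<exists>e. is_partition e \<and> length e = m - 1 \<and> sum_list e = E \<and> gmaj c e \<and> gmaj d e"
  using E
proof
  assume "E = (\<Sum>j<m. max (c!j) (d!j)) - max (c!0) (d!0)"
  then show ?thesis using ex_e[of 0 0] fmax f0 by simp
next
  assume A: "2 \<le> m \<and> (\<Sum>j<m. max (c!j) (d!j)) - max (c!1) (d!1) \<le> E"
  then have "2 \<le> m" by blast
  then have "1 \<le> m - 1" by simp
  then show ?thesis using A ex_e[of 1 "E - ((\<Sum>j<m. max (c!j) (d!j)) - max (c!1) (d!1))"] fmax f0 by simp
qed

lemma ex3:
  assumes f0: "f = 0 \<or> f' = 0" and E: "E = (\<Sum>j<m. max (c!j) (d!j)) - max (c!0) (d!0) \<or>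
      (2 \<le> m \<and> (\<Sum>j<m. max (c!j) (d!j)) - max (c!1) (d!1) \<le> E)"
  shows "\<exists>e. is_partition e \<and> length e = m - 1 \<and> sum_list e = E \<and> gmaj c e \<and> gmaj d e"
proof (cases "f = 0")
  case True then show ?thesis using ex3_aux E by blast
next
  case False
  then have "f' = 0" using f0 by simp
  then have "\<exists>e. is_partition e \<and> length e = m - 1 \<and> sum_list e = E \<and> gmaj d e \<and> gmaj c e"
    using tp.ex3_aux[OF tp_sym[OF tp_axioms], of E] E by (simp add: max.commute)
  then show ?thesis by blast
qed

lemma M_aux: "f = 0 \<Longrightarrow> max (c!f) (d!f') = max (c!0) (d!0)"
proof -
  assume f0: "f = 0"
  show ?thesis
  proof (cases "l = 0")
    case True then show ?thesis using f0 f'l by simp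
  next
    case False
    then have "d!0 \<le> c!1" using fmax[of 1] f0 by simp
    then have "d!0 \<le> c!0" using cmono[of 0 1] False lm by simp
    moreover have "d!f' \<le> d!0" using dmono[of 0 f'] f'l lm by simp
    ultimately show ?thesis using f0 by simp
  qed
qed

lemma M: "f = 0 \<or> f' = 0 \<Longrightarrow> max (c!f) (d!f') = max (c!0) (d!0)"
  using M_aux tp.M_aux[OF tp_sym[OF tp_axioms]] by (metis max.commute)

lemma M2_aux: "f = 0 \<Longrightarrow> 2 \<le> m \<Longrightarrow> max (entx c (f+2)) (entx d (f'+2)) = ereal (max (c!1) (d!1))"
proof -
  assume f0: "f = 0" and m2: "2 \<le> m"
  have ec: "entx c (f+2) = ereal (c!1)" using f0 m2 lc by (simp add: entx_def)
  have ed: "entx d (f'+2) \<le> ereal (d!1)"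
    using dmono[of 1 "f'+1"] ld by (auto simp: entx_def)
  show ?thesis
  proof (cases "l = 0")
    case True
    then have "f' = 0" using f'l by simp
    then show ?thesis using ec m2 ld by (auto simp: entx_def max_def)
  next
    case False
    then have "d!0 \<le> c!1" using fmax[of 1] f0 by simp
    then have "d!1 \<le> c!1" using dmono[of 0 1] m2 by simp
    then have "entx d (f'+2) \<le> entx c (f+2)" using ec ed by (metis ereal_less_eq(3) of_int_le_iff order_trans)
    then have "max (entx c (f+2)) (entx d (f'+2)) = ereal (c!1)" using ec by (simp add: max_absorb1)
    then show ?thesis using \<open>d!1 \<le> c!1\<close> by (simp add: max_absorb1)
  qed
qed

lemma M2: "f = 0 \<or> f' = 0 \<Longrightarrow> 2 \<le> m \<Longrightarrow> max (entx c (f+2)) (entx d (f'+2)) = ereal (max (c!1) (d!1))"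
  using M2_aux tp.M2_aux[OF tp_sym[OF tp_axioms]] by (metis max.commute)

end


lemma lidx_props:
  assumes "length c = m" "length d = m" "c \<noteq> d"
  shows "1 \<le> lidx c d \<and> lidx c d \<le> m \<and> c!(lidx c d - 1) \<noteq> d!(lidx c d - 1) \<and>
         (\<forall>j. lidx c d - 1 < j \<longrightarrow> j < m \<longrightarrow> c!j = d!j)"
proof -
  define A where "A = {i \<in> {1..length c}. c ! (i - 1) \<noteq> d ! (i - 1)}"
  obtain j where j: "j < m" "c!j \<noteq> d!j" using assms by (metis nth_equalityI)
  have "Suc j \<in> A" using j assms by (simp add: A_def)
  then have ne: "A \<noteq> {}" by blast
  have fin: "finite A" by (simp add: A_def)
  have L: "lidx c d = Max A" by (simp add: lidx_def A_def)
  have MA: "Max A \<in> A" using Max_in[OF fin ne] .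
  have mx: "\<forall>i\<in>A. i \<le> Max A" using Max_ge[OF fin] by blast
  show ?thesis
  proof (intro conjI allI impI)
    show "1 \<le> lidx c d" "lidx c d \<le> m" "c!(lidx c d - 1) \<noteq> d!(lidx c d - 1)"
      using MA L assms by (auto simp: A_def)
  next
    fix i assume i: "lidx c d - 1 < i" "i < m"
    show "c!i = d!i"
    proof (rule ccontr)
      assume "c!i \<noteq> d!i"
      then have "Suc i \<in> A" using i assms by (simp add: A_def)
      then show False using mx L i by fastforce
    qed
  qed
qed

lemma lidx_sym: "length c = length d \<Longrightarrow> lidx d c = lidx c d"
  unfolding lidx_def by (metis)

lemma fidx_props:
  assumes lc: "length c = m" and ld: "length d = m" and L1: "1 \<le> lidx c d" and Lm: "lidx c d \<le> m"
  shows "1 \<le> fidx c d \<and> fidx c d \<le> lidx c d \<and>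
    (fidx c d - 1 = 0 \<or> c!(fidx c d - 1) < d!(fidx c d - 1 - 1)) \<and>
    (\<forall>i. fidx c d - 1 < i \<longrightarrow> i \<le> lidx c d - 1 \<longrightarrow> d!(i-1) \<le> c!i)"
proof -
  define B where "B = {i \<in> {1..lidx c d}. entx c i < entx d (i - 1)}"
  have "1 \<in> B" using L1 Lm lc by (simp add: B_def entx_def)
  then have ne: "B \<noteq> {}" by blast
  have fin: "finite B" by (simp add: B_def)
  have F: "fidx c d = Max B" by (simp add: fidx_def B_def)
  have MB: "Max B \<in> B" using Max_in[OF fin ne] .
  have mx: "\<forall>i\<in>B. i \<le> Max B" using Max_ge[OF fin] by blast
  show ?thesis
  proof (intro conjI allI impI)
    show "1 \<le> fidx c d" "fidx c d \<le> lidx c d" using MB F by (auto simp: B_def)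
  next
    show "fidx c d - 1 = 0 \<or> c!(fidx c d - 1) < d!(fidx c d - 1 - 1)"
    proof (cases "fidx c d - 1 = 0")
      case False
      then have "2 \<le> fidx c d" "fidx c d \<le> m" using MB F Lm by (auto simp: B_def)
      moreover have FB: "entx c (fidx c d) < entx d (fidx c d - 1)" using MB F by (simp add: B_def)
      moreover obtain k where k: "fidx c d = Suc (Suc k)" using \<open>2 \<le> fidx c d\<close> by (metis add_2_eq_Suc le_Suc_ex)
      ultimately show ?thesis using lc ld False by (simp add: entx_def)
    qed simp
  next
    fix i assume i: "fidx c d - 1 < i" "i \<le> lidx c d - 1"
    have "Suc i \<notin> B" using mx F i by fastforce
    moreover have "Suc i \<in> {1..lidx c d}" using i L1 by auto
    moreover have "1 \<le> i" "Suc i \<le> m" using i L1 Lm by auto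
    ultimately show "d!(i-1) \<le> c!i" using lc ld by (auto simp: B_def entx_def)
  qed
qed

lemma ereal_int_le_add: "ereal (of_int S) \<le> ereal (of_int A) + ereal (of_int M) \<longleftrightarrow> S \<le> A + M"
  by (metis plus_ereal.simps(1) ereal_less_eq(3) of_int_add of_int_le_iff)
lemma ereal_int_ge_sub: "ereal (of_int X) - ereal (of_int M) \<le> ereal (of_int E) \<longleftrightarrow> X - M \<le> E"
proof -
  have "ereal (of_int X) - ereal (of_int M) = ereal (of_int (X - M))" by simp
  then show ?thesis by (simp del: of_int_diff add: of_int_diff[symmetric])
qed
lemma ereal_int_eq_sub: "ereal (of_int E) = ereal (of_int X) - ereal (of_int M) \<longleftrightarrow> E = X - M"
proof -
  have "ereal (of_int X) - ereal (of_int M) = ereal (of_int (X - M))" by simp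
  then show ?thesis by (simp del: of_int_diff add: of_int_diff[symmetric])
qed

theorem lemma5p3:
  fixes S E :: int and c d :: "int list" and m :: nat
  assumes "0 \<le> S" and "0 \<le> E"
    and "is_partition c" and "is_partition d"
    and "length c = m" and "length d = m" and "c \<noteq> d"
  shows
   "((\<exists>g. is_partition g \<and> length g = m + 1 \<and> sum_list g = S \<and> gmaj g c \<and> gmaj g d)
       \<longleftrightarrow> ereal (of_int S) \<le> ereal (of_int (\<Sum>i=1..m. min (c ! (i - 1)) (d ! (i - 1))))
                 + max (entx c (fidx c d)) (entx d (fidx d c)))
    \<and> (fidx c d > 1 \<and> fidx d c > 1 \<longrightarrow>
       ((\<exists>e. is_partition e \<and> length e = m - 1 \<and> sum_list e = E \<and> gmaj c e \<and> gmaj d e)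
         \<longleftrightarrow> ereal (of_int E) \<ge> ereal (of_int (\<Sum>i=1..m. max (c ! (i - 1)) (d ! (i - 1))))
                 - max (entx c (fidx c d)) (entx d (fidx d c))))
    \<and> (fidx c d = 1 \<or> fidx d c = 1 \<longrightarrow>
       ((\<exists>e. is_partition e \<and> length e = m - 1 \<and> sum_list e = E \<and> gmaj c e \<and> gmaj d e)
         \<longleftrightarrow> (ereal (of_int E) = ereal (of_int (\<Sum>i=1..m. max (c ! (i - 1)) (d ! (i - 1))))
                 - max (entx c (fidx c d)) (entx d (fidx d c))
              \<or> ereal (of_int E) \<ge> ereal (of_int (\<Sum>i=1..m. max (c ! (i - 1)) (d ! (i - 1))))
                 - max (entx c (fidx c d + 1)) (entx d (fidx d c + 1))))
       \<and> (m \<ge> 2 \<longrightarrow>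
         ((\<exists>e. is_partition e \<and> length e = m - 1 \<and> sum_list e = E \<and> gmaj c e \<and> gmaj d e)
           \<longleftrightarrow> (E = (\<Sum>i=2..m. max (c ! (i - 1)) (d ! (i - 1)))
                \<or> E \<ge> max (c ! 0) (d ! 0) + (\<Sum>i=3..m. max (c ! (i - 1)) (d ! (i - 1)))))))"
proof -
  note lc = assms(5) and ld = assms(6)
  define L where "L = lidx c d"
  define F where "F = fidx c d"
  define F' where "F' = fidx d c"
  have Lp: "1 \<le> L" "L \<le> m" "c!(L - 1) \<noteq> d!(L - 1)" "\<forall>j. L - 1 < j \<longrightarrow> j < m \<longrightarrow> c!j = d!j"
    using lidx_props[OF lc ld assms(7)] by (auto simp: L_def)
  have LL: "lidx d c = L" using lidx_sym lc ld L_def by simp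
  have Fp: "1 \<le> F" "F \<le> L" "F - 1 = 0 \<or> c!(F - 1) < d!(F - 1 - 1)"
     "\<forall>i. F - 1 < i \<longrightarrow> i \<le> L - 1 \<longrightarrow> d!(i-1) \<le> c!i"
    using fidx_props[OF lc ld] Lp by (auto simp: F_def L_def)
  have F'p: "1 \<le> F'" "F' \<le> L" "F' - 1 = 0 \<or> d!(F' - 1) < c!(F' - 1 - 1)"
     "\<forall>i. F' - 1 < i \<longrightarrow> i \<le> L - 1 \<longrightarrow> c!(i-1) \<le> d!i"
    using fidx_props[OF ld lc] Lp LL by (auto simp: F'_def L_def)
  interpret tp c d m "L - 1" "F - 1" "F' - 1"
    apply unfold_locales
    using assms(3,4) lc ld Lp Fp F'p by (auto simp: is_partition_def)
  define X where "X = (\<Sum>j<m. max (c!j) (d!j))"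
  have sumN: "(\<Sum>i=1..m. min (c ! (i - 1)) (d ! (i - 1))) = (\<Sum>j<m. min (c!j) (d!j))"
    using sum_shift1[where a=0 and m=m and F="\<lambda>j. min (c!j) (d!j)"] by (simp add: atLeast0LessThan)
  have sumX: "(\<Sum>i=1..m. max (c ! (i - 1)) (d ! (i - 1))) = X"
    using sum_shift1[where a=0 and m=m and F="\<lambda>j. max (c!j) (d!j)"] by (simp add: atLeast0LessThan X_def)
  have eF: "entx c F = ereal (of_int (c!(F-1)))" using Fp Lp lc by (simp add: entx_def)
  have eF': "entx d F' = ereal (of_int (d!(F'-1)))" using F'p Lp ld by (simp add: entx_def)
  have Mx: "max (entx c F) (entx d F') = ereal (of_int (max (c!(F-1)) (d!(F'-1))))"
    using eF eF' by (simp add: of_int_max)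
  have part1: "(\<exists>g. is_partition g \<and> length g = m + 1 \<and> sum_list g = S \<and> gmaj g c \<and> gmaj g d)
       \<longleftrightarrow> ereal (of_int S) \<le> ereal (of_int (\<Sum>i=1..m. min (c ! (i - 1)) (d ! (i - 1))))
                 + max (entx c (fidx c d)) (entx d (fidx d c))"
    unfolding F_def[symmetric] F'_def[symmetric] Mx sumN ereal_int_le_add
    using ub1 ex1[OF assms(1)] by auto
  have Pequiv: "(\<exists>e. is_partition e \<and> length e = m - 1 \<and> sum_list e = E \<and> gmaj c e \<and> gmaj d e)
     \<Longrightarrow> X - max (c!(F-1)) (d!(F'-1)) \<le> E \<and> (E = X - max (c!0) (d!0) \<or> (2 \<le> m \<and> X - max (c!1) (d!1) \<le> E))"
    using lb2 unfolding X_def by blast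
  have part2: "fidx c d > 1 \<and> fidx d c > 1 \<longrightarrow>
       ((\<exists>e. is_partition e \<and> length e = m - 1 \<and> sum_list e = E \<and> gmaj c e \<and> gmaj d e)
         \<longleftrightarrow> ereal (of_int E) \<ge> ereal (of_int (\<Sum>i=1..m. max (c ! (i - 1)) (d ! (i - 1))))
                 - max (entx c (fidx c d)) (entx d (fidx d c)))"
    unfolding F_def[symmetric] F'_def[symmetric] Mx sumX ereal_int_ge_sub
    using Pequiv ex2 unfolding X_def by auto
  have part3: "fidx c d = 1 \<or> fidx d c = 1 \<longrightarrow>
       ((\<exists>e. is_partition e \<and> length e = m - 1 \<and> sum_list e = E \<and> gmaj c e \<and> gmaj d e)
         \<longleftrightarrow> (ereal (of_int E) = ereal (of_int (\<Sum>i=1..m. max (c ! (i - 1)) (d ! (i - 1))))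
                 - max (entx c (fidx c d)) (entx d (fidx d c))
              \<or> ereal (of_int E) \<ge> ereal (of_int (\<Sum>i=1..m. max (c ! (i - 1)) (d ! (i - 1))))
                 - max (entx c (fidx c d + 1)) (entx d (fidx d c + 1))))
       \<and> (m \<ge> 2 \<longrightarrow>
         ((\<exists>e. is_partition e \<and> length e = m - 1 \<and> sum_list e = E \<and> gmaj c e \<and> gmaj d e)
           \<longleftrightarrow> (E = (\<Sum>i=2..m. max (c ! (i - 1)) (d ! (i - 1)))
                \<or> E \<ge> max (c ! 0) (d ! 0) + (\<Sum>i=3..m. max (c ! (i - 1)) (d ! (i - 1))))))"
  proof
    assume "fidx c d = 1 \<or> fidx d c = 1"
    then have f0: "F - 1 = 0 \<or> F' - 1 = 0" by (auto simp: F_def F'_def)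
    have P: "(\<exists>e. is_partition e \<and> length e = m - 1 \<and> sum_list e = E \<and> gmaj c e \<and> gmaj d e)
       \<longleftrightarrow> (E = X - max (c!0) (d!0) \<or> (2 \<le> m \<and> X - max (c!1) (d!1) \<le> E))"
      using Pequiv ex3[OF f0] unfolding X_def by blast
    have M1: "max (c!(F-1)) (d!(F'-1)) = max (c!0) (d!0)" using M[OF f0] .
    have F2: "F + 1 = (F - 1) + 2" "F' + 1 = (F' - 1) + 2" using Fp F'p by auto
    have M2': "max (entx c (F+1)) (entx d (F'+1)) = (if 2 \<le> m then ereal (of_int (max (c!1) (d!1))) else -\<infinity>)"
    proof (cases "2 \<le> m")
      case True then show ?thesis using M2[OF f0 True] F2 by (simp add: of_int_max)
    next
      case False
      then show ?thesis using Fp F'p lc ld by (simp add: entx_def)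
    qed
    have A: "(ereal (of_int E) = ereal (of_int X) - max (entx c F) (entx d F')
              \<or> ereal (of_int E) \<ge> ereal (of_int X) - max (entx c (F + 1)) (entx d (F' + 1)))
         \<longleftrightarrow> (E = X - max (c!0) (d!0) \<or> (2 \<le> m \<and> X - max (c!1) (d!1) \<le> E))"
      unfolding Mx M1 M2' by (cases "2 \<le> m") (auto simp: ereal_int_eq_sub ereal_int_ge_sub)
    have B: "m \<ge> 2 \<Longrightarrow> (E = (\<Sum>i=2..m. max (c ! (i - 1)) (d ! (i - 1)))
                \<or> E \<ge> max (c ! 0) (d ! 0) + (\<Sum>i=3..m. max (c ! (i - 1)) (d ! (i - 1))))
         \<longleftrightarrow> (E = X - max (c!0) (d!0) \<or> (2 \<le> m \<and> X - max (c!1) (d!1) \<le> E))"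
    proof -
      assume m2: "m \<ge> 2"
      have s2: "(\<Sum>i=2..m. max (c ! (i - 1)) (d ! (i - 1))) = (\<Sum>j=1..<m. max (c!j) (d!j))"
        using sum_shift1[where a=1 and m=m and F="\<lambda>j. max (c!j) (d!j)"] by (simp add: numeral_2_eq_2)
      have s3: "(\<Sum>i=3..m. max (c ! (i - 1)) (d ! (i - 1))) = (\<Sum>j=2..<m. max (c!j) (d!j))"
        using sum_shift1[where a=2 and m=m and F="\<lambda>j. max (c!j) (d!j)"] by (simp add: numeral_3_eq_3)
      have x0: "X = max (c!0) (d!0) + (\<Sum>j=1..<m. max (c!j) (d!j))"
        unfolding X_def using m2 by (simp add: lessThan_atLeast0 sum.atLeast_Suc_lessThan)
      have x1: "(\<Sum>j=1..<m. max (c!j) (d!j)) = max (c!1) (d!1) + (\<Sum>j=2..<m. max (c!j) (d!j))"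
        using m2 by (simp add: sum.atLeast_Suc_lessThan numeral_2_eq_2)
      show ?thesis unfolding s2 s3 using x0 x1 m2 by auto
    qed
    show "((\<exists>e. is_partition e \<and> length e = m - 1 \<and> sum_list e = E \<and> gmaj c e \<and> gmaj d e)
         \<longleftrightarrow> (ereal (of_int E) = ereal (of_int (\<Sum>i=1..m. max (c ! (i - 1)) (d ! (i - 1))))
                 - max (entx c (fidx c d)) (entx d (fidx d c))
              \<or> ereal (of_int E) \<ge> ereal (of_int (\<Sum>i=1..m. max (c ! (i - 1)) (d ! (i - 1))))
                 - max (entx c (fidx c d + 1)) (entx d (fidx d c + 1))))
       \<and> (m \<ge> 2 \<longrightarrow>
         ((\<exists>e. is_partition e \<and> length e = m - 1 \<and> sum_list e = E \<and> gmaj c e \<and> gmaj d e)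
           \<longleftrightarrow> (E = (\<Sum>i=2..m. max (c ! (i - 1)) (d ! (i - 1)))
                \<or> E \<ge> max (c ! 0) (d ! 0) + (\<Sum>i=3..m. max (c ! (i - 1)) (d ! (i - 1))))))"
      unfolding F_def[symmetric] F'_def[symmetric] sumX using P A B by blast
  qed
  show ?thesis using part1 part2 part3 by blast
qed


end
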